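(* Let $\mathcal{D}$ be a distribution on $[n]$, $\varepsilon>0$, and $T$ any binary search tree on $[n]$. There is a monotonicity tester for functions $f:[n]\to\mathbb{R}$ with respect to $\mathcal{D}$ with proximity parameter $\varepsilon$ that makes at most $24\,\varepsilon^{-1}\Delta(T;\mathcal{D})$ queries.
   Context: A binary search tree (BST) on $[n]$ has nodes labeled bijectively by $[n]$ with left descendants smaller and right descendants larger; $\mathrm{depth}_T(v)$ is the number of edges from $v$ to the root, and $\Delta(T;\mathcal{D})=\mathbb{E}_{v\sim\mathcal{D}}[\mathrm{depth}_T(v)]$. $f$ is monotone if $f(x)\le f(y)$ for $x\le y$. A monotonicity tester w.r.t. $\mathcal{D}$ with proximity parameter $\varepsilon$ accepts monotone $f$ with probability $>2/3$ and rejects with probability $>2/3$ any $f$ with $\min_{g\text{ monotone}}\Pr_{x\sim\mathcal{D}}[f(x)\ne g(x)]>\varepsilon$. *)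

theory Defs
  imports "HOL-Library.Tree" "HOL-Probability.Probability"
begin

definition is_bst_on :: "nat \<Rightarrow> nat tree \<Rightarrow> bool" where
  "is_bst_on n T \<longleftrightarrow> bst T \<and> set_tree T = {1..n}"

fun node_depth :: "nat tree \<Rightarrow> nat \<Rightarrow> nat" where
  "node_depth Leaf v = 0"
| "node_depth (Node l a r) v =
     (if v = a then 0 else if v < a then Suc (node_depth l v) else Suc (node_depth r v))"

definition exp_depth :: "nat tree \<Rightarrow> nat pmf \<Rightarrow> real" where
  "exp_depth T D = measure_pmf.expectation D (\<lambda>v. real (node_depth T v))"

definition dist_mono :: "nat \<Rightarrow> nat pmf \<Rightarrow> (nat \<Rightarrow> real) \<Rightarrow> real" where
  "dist_mono n D f = Inf {measure_pmf.prob D {x. f x \<noteq> g x} | g. mono_on {1..n} g}"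

text \<open>Deterministic adaptive query algorithms: decision trees that query f at a point
  and branch on the real answer, finally outputting accept (True) or reject (False).\<close>
datatype qtree = Output bool | Ask nat "real \<Rightarrow> qtree"

primrec run_qt :: "qtree \<Rightarrow> (nat \<Rightarrow> real) \<Rightarrow> bool" where
  "run_qt (Output b) f = b"
| "run_qt (Ask i k) f = run_qt (k (f i)) f"

primrec nqueries :: "qtree \<Rightarrow> (nat \<Rightarrow> real) \<Rightarrow> nat" where
  "nqueries (Output b) f = 0"
| "nqueries (Ask i k) f = Suc (nqueries (k (f i)) f)"

primrec queries_in :: "nat set \<Rightarrow> qtree \<Rightarrow> (nat \<Rightarrow> real) \<Rightarrow> bool" where
  "queries_in S (Output b) f = True"
| "queries_in S (Ask i k) f = (i \<in> S \<and> queries_in S (k (f i)) f)"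

definition mono_tester :: "nat \<Rightarrow> nat pmf \<Rightarrow> real \<Rightarrow> qtree pmf \<Rightarrow> bool" where
  "mono_tester n D \<epsilon> A \<longleftrightarrow>
     (\<forall>t\<in>set_pmf A. \<forall>f. queries_in {1..n} t f) \<and>
     (\<forall>f. mono_on {1..n} f \<longrightarrow> measure_pmf.prob A {t. run_qt t f} > 2/3) \<and>
     (\<forall>f. dist_mono n D f > \<epsilon> \<longrightarrow> measure_pmf.prob A {t. \<not> run_qt t f} > 2/3)"

definition max_queries_le :: "qtree pmf \<Rightarrow> real \<Rightarrow> bool" where
  "max_queries_le A q \<longleftrightarrow> (\<forall>t\<in>set_pmf A. \<forall>f. real (nqueries t f) \<le> q)"

end

theory Submission
  imports Defs "HOL-Probability.Product_PMF"
begin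

fun path :: "nat tree \<Rightarrow> nat \<Rightarrow> nat list" where
  "path Leaf v = []"
| "path (Node l a r) v = a # (if v = a then [] else if v < a then path l v else path r v)"

definition good :: "nat tree \<Rightarrow> (nat \<Rightarrow> real) \<Rightarrow> nat \<Rightarrow> bool" where
  "good T f v \<longleftrightarrow> (\<forall>u\<in>set (path T v). (u \<le> v \<longrightarrow> f u \<le> f v) \<and> (v \<le> u \<longrightarrow> f v \<le> f u))"

definition cost :: "nat tree \<Rightarrow> nat \<Rightarrow> nat" where
  "cost T v = (if node_depth T v = 0 then 0 else length (path T v))"

fun askl :: "nat list \<Rightarrow> (nat \<Rightarrow> real) \<Rightarrow> ((nat \<Rightarrow> real) \<Rightarrow> qtree) \<Rightarrow> qtree" where
  "askl [] g c = c g"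
| "askl (i # is) g c = Ask i (\<lambda>r. askl is (g(i := r)) c)"

fun tst :: "nat tree \<Rightarrow> nat list \<Rightarrow> nat \<Rightarrow> qtree" where
  "tst T [] b = Output True"
| "tst T (v # vs) b = (if cost T v = 0 then tst T vs b
      else if cost T v \<le> b then askl (path T v) (\<lambda>_. 0)
         (\<lambda>h. if good T h v then tst T vs (b - cost T v) else Output False)
      else Output True)"

lemma askl_run: "run_qt (askl is g c) f = run_qt (c (\<lambda>j. if j \<in> set is then f j else g j)) f"
proof (induction "is" arbitrary: g)
  case (Cons i "is")
  have eq: "(\<lambda>j. if j \<in> set is then f j else (g(i := f i)) j) = (\<lambda>j. if j \<in> set (i # is) then f j else g j)"
    by (auto simp: fun_eq_iff)
  show ?case using Cons[of "g(i := f i)"] by (simp only: askl.simps run_qt.simps nqueries.simps queries_in.simps eq; simp)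
qed simp

lemma askl_nq: "nqueries (askl is g c) f = length is + nqueries (c (\<lambda>j. if j \<in> set is then f j else g j)) f"
proof (induction "is" arbitrary: g)
  case (Cons i "is")
  have eq: "(\<lambda>j. if j \<in> set is then f j else (g(i := f i)) j) = (\<lambda>j. if j \<in> set (i # is) then f j else g j)"
    by (auto simp: fun_eq_iff)
  show ?case using Cons[of "g(i := f i)"] by (simp only: askl.simps run_qt.simps nqueries.simps queries_in.simps eq; simp)
qed simp

lemma askl_qi: "queries_in S (askl is g c) f = (set is \<subseteq> S \<and> queries_in S (c (\<lambda>j. if j \<in> set is then f j else g j)) f)"
proof (induction "is" arbitrary: g)
  case (Cons i "is")
  have eq: "(\<lambda>j. if j \<in> set is then f j else (g(i := f i)) j) = (\<lambda>j. if j \<in> set (i # is) then f j else g j)"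
    by (auto simp: fun_eq_iff)
  show ?case using Cons[of "g(i := f i)"] by (simp only: askl.simps run_qt.simps nqueries.simps queries_in.simps eq; simp)
qed simp

lemma path_sub: "set (path T v) \<subseteq> set_tree T"
  by (induction T) auto

lemma path_mem: "bst T \<Longrightarrow> v \<in> set_tree T \<Longrightarrow> v \<in> set (path T v)"
  by (induction T) auto

lemma path_len: "bst T \<Longrightarrow> v \<in> set_tree T \<Longrightarrow> length (path T v) = Suc (node_depth T v)"
  by (induction T) auto

lemma good_cong: "bst T \<Longrightarrow> v \<in> set_tree T \<Longrightarrow> (\<forall>u\<in>set (path T v). h u = f u) \<Longrightarrow> good T h v = good T f v"
  using path_mem[of T v] unfolding good_def by auto

lemma good_root: "bst T \<Longrightarrow> v \<in> set_tree T \<Longrightarrow> node_depth T v = 0 \<Longrightarrow> good T f v"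
  by (cases T) (auto simp: good_def split: if_splits)

lemma good_mono: "mono_on (set_tree T) f \<Longrightarrow> v \<in> set_tree T \<Longrightarrow> good T f v"
  using path_sub[of T v] unfolding good_def by (auto intro: mono_onD)

lemma good_ord: "bst T \<Longrightarrow> x \<in> set_tree T \<Longrightarrow> y \<in> set_tree T \<Longrightarrow> x < y \<Longrightarrow> good T f x \<Longrightarrow> good T f y \<Longrightarrow> f x \<le> f y"
proof (induction T)
  case Leaf
  then show ?case by simp
next
  case (Node l a r)
  have ga: "a \<in> set (path \<langle>l, a, r\<rangle> x)" "a \<in> set (path \<langle>l, a, r\<rangle> y)" by auto
  have gl: "good l f z" if "z < a" "good \<langle>l, a, r\<rangle> f z" for z
    using that unfolding good_def by auto
  have gr: "good r f z" if "a < z" "good \<langle>l, a, r\<rangle> f z" for z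
    using that unfolding good_def by auto
  show ?case
  proof (cases "x = a")
    case True then show ?thesis using Node.prems ga unfolding good_def by auto
  next
    case xa: False
    show ?thesis
    proof (cases "y = a")
      case True then show ?thesis using Node.prems ga unfolding good_def by auto
    next
      case ya: False
      show ?thesis
      proof (cases "x < a")
        case xl: True
        show ?thesis
        proof (cases "y < a")
          case True
          have "x \<in> set_tree l" "y \<in> set_tree l" using xl True xa ya Node.prems(1,2,3) by auto
          then show ?thesis using Node.IH(1) Node.prems gl[of x] gl[of y] xl True by auto
        next
          case False
          then have "f x \<le> f a" "f a \<le> f y" using xl ya Node.prems ga unfolding good_def by auto
          then show ?thesis by simp
        qed
      next
        case False
        then have "a < x" "a < y" using xa Node.prems(4) by auto
        then have "x \<in> set_tree r" "y \<in> set_tree r" using xa ya Node.prems(1,2,3) by auto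
        then show ?thesis using Node.IH(2) Node.prems gr[of x] gr[of y] \<open>a < x\<close> \<open>a < y\<close> by auto
      qed
    qed
  qed
qed

lemma tst_nq: "nqueries (tst T vs b) f \<le> b"
proof (induction vs arbitrary: b)
  case (Cons v vs)
  show ?case
  proof (cases "cost T v = 0")
    case True then show ?thesis using Cons.IH[of b] by simp
  next
    case False
    then have c: "cost T v = length (path T v)" by (simp add: cost_def split: if_splits)
    show ?thesis
    proof (cases "cost T v \<le> b")
      case True
      have "nqueries (tst T vs (b - cost T v)) f \<le> b - cost T v" by (rule Cons.IH)
      then show ?thesis using True False c by (auto simp: askl_nq)
    qed (use False in simp)
  qed
qed simp

lemma tst_qi: "queries_in (set_tree T) (tst T vs b) f"
proof (induction vs arbitrary: b)
  case (Cons v vs)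
  have p: "set (path T v) \<subseteq> set_tree T" by (rule path_sub)
  have q: "queries_in (set_tree T) (if good T h v then tst T vs (b - cost T v) else Output False) f" for h
    using Cons.IH by simp
  have a: "queries_in (set_tree T) (askl (path T v) (\<lambda>_. 0) (\<lambda>h. if good T h v then tst T vs (b - cost T v) else Output False)) f"
    unfolding askl_qi using p q by blast
  show ?case
  proof (cases "cost T v = 0")
    case True then show ?thesis using Cons.IH by simp
  next
    case False
    show ?thesis
    proof (cases "cost T v \<le> b")
      case True
      then show ?thesis using a False by (simp only: tst.simps if_False if_True) 
    next
      case c: False
      then show ?thesis using False by (simp only: tst.simps if_False queries_in.simps)
    qed
  qed
next
  case Nil show ?case by (simp only: tst.simps queries_in.simps)
qed

lemma tst_acc: "bst T \<Longrightarrow> set vs \<subseteq> set_tree T \<Longrightarrow> (\<forall>v\<in>set vs. good T f v) \<Longrightarrow> run_qt (tst T vs b) f"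
proof (induction vs arbitrary: b)
  case (Cons v vs)
  have "good T (\<lambda>j. if j \<in> set (path T v) then f j else 0) v = good T f v"
    using Cons.prems by (intro good_cong) auto
  then show ?case using Cons by (auto simp: askl_run)
qed simp

lemma tst_rej: "bst T \<Longrightarrow> set vs \<subseteq> set_tree T \<Longrightarrow> (\<exists>v\<in>set vs. \<not> good T f v) \<Longrightarrow>
   sum_list (map (cost T) vs) \<le> b \<Longrightarrow> \<not> run_qt (tst T vs b) f"
proof (induction vs arbitrary: b)
  case (Cons v vs)
  have gc: "good T (\<lambda>j. if j \<in> set (path T v) then f j else 0) v = good T f v"
    using Cons.prems by (intro good_cong) auto
  show ?case
  proof (cases "good T f v")
    case True
    then have "\<exists>v\<in>set vs. \<not> good T f v" using Cons.prems by auto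
    then show ?thesis using Cons True gc by (auto simp: askl_run)
  next
    case False
    then have "cost T v \<noteq> 0" using good_root[of T v f] Cons.prems path_mem[of T v] by (auto simp: cost_def)
    then show ?thesis using Cons False gc path_mem[of T v] by (auto simp: askl_run)
  qed
qed simp

lemma exp_taylor6: "0 \<le> (x::real) \<Longrightarrow> 1 + x + x^2/2 + x^3/6 + x^4/24 + x^5/120 \<le> exp x"
proof -
  assume x: "0 \<le> x"
  have s: "(\<lambda>n. x^n /\<^sub>R fact n) sums exp x" by (rule exp_converges)
  have "(\<Sum>n<6. x^n /\<^sub>R fact n) \<le> suminf (\<lambda>n. x^n /\<^sub>R fact n)"
    by (rule sum_le_suminf) (use s x in \<open>auto simp: sums_iff\<close>)
  also have "\<dots> = exp x" using s by (simp add: sums_iff)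
  finally show ?thesis by (simp add: numeral_eq_Suc fact_numeral divide_simps)
qed
lemma numbound: "2 \<le> (x::real) \<Longrightarrow> x \<le> 3 \<Longrightarrow> exp (-x) + x/12 < 1/3"
proof -
  assume a: "2 \<le> x" "x \<le> 3"
  have e: "exp (- x) \<le> 1 / (1 + c + c^2/2 + c^3/6 + c^4/24 + c^5/120)" if "0 \<le> c" "c \<le> x" for c :: real
  proof -
    have "1 + c + c^2/2 + c^3/6 + c^4/24 + c^5/120 \<le> exp c" using exp_taylor6 that by blast
    also have "\<dots> \<le> exp x" using that by simp
    finally have "1 + c + c^2/2 + c^3/6 + c^4/24 + c^5/120 \<le> exp x" .
    moreover have "0 < 1 + c + c^2/2 + c^3/6 + c^4/24 + c^5/120" using that by (simp add: add_pos_nonneg)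
    ultimately show ?thesis by (simp add: exp_minus divide_simps)
  qed
  consider "x \<le> 9/4" | "9/4 \<le> x" "x \<le> 5/2" | "5/2 \<le> x" "x \<le> 11/4" | "11/4 \<le> x" by linarith
  then show ?thesis
  proof cases
    case 1 then show ?thesis using e[of 2] a by (simp add: power_numeral_reduce)
  next
    case 2 then show ?thesis using e[of "9/4"] a by (simp add: power_numeral_reduce)
  next
    case 3 then show ?thesis using e[of "5/2"] a by (simp add: power_numeral_reduce)
  next
    case 4 then show ?thesis using e[of "11/4"] a by (simp add: power_numeral_reduce)
  qed
qed

lemma prob1: "set_pmf M \<subseteq> S \<Longrightarrow> measure_pmf.prob M S = 1"
proof -
  assume "set_pmf M \<subseteq> S"
  then have "measure_pmf.prob M (UNIV - S) = 0" by (subst measure_pmf_zero_iff) auto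
  then show ?thesis using measure_pmf.prob_compl[of S M] by simp
qed

lemma ext_mono:
  fixes f :: "nat \<Rightarrow> real" and S0 :: "nat set"
  assumes fin: "finite S0" and fm: "\<And>x y. x \<in> S0 \<Longrightarrow> y \<in> S0 \<Longrightarrow> x \<le> y \<Longrightarrow> f x \<le> f y"
  shows "\<exists>g. mono g \<and> (\<forall>y\<in>S0. g y = f y)"
proof -
  define g where "g x = (if \<exists>y\<in>S0. y \<le> x then Max (f ` {y\<in>S0. y \<le> x}) else Min (f ` S0))" for x
  have "mono g"
  proof (rule monoI)
    fix x x' :: nat assume xx: "x \<le> x'"
    show "g x \<le> g x'"
    proof (cases "\<exists>y\<in>S0. y \<le> x")
      case True
      then have T': "\<exists>y\<in>S0. y \<le> x'" using xx by (meson order_trans)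
      have "Max (f ` {y\<in>S0. y \<le> x}) \<le> Max (f ` {y\<in>S0. y \<le> x'})"
        using True xx fin by (intro Max_mono) auto
      then show ?thesis using True T' by (simp add: g_def)
    next
      case False
      show ?thesis
      proof (cases "\<exists>y\<in>S0. y \<le> x'")
        case True
        then obtain y where y: "y \<in> S0" "y \<le> x'" by auto
        have "Min (f ` S0) \<le> f y" using fin y by auto
        also have "f y \<le> Max (f ` {y\<in>S0. y \<le> x'})" using fin y by (intro Max_ge) auto
        finally show ?thesis using False True by (simp add: g_def)
      qed (use False in \<open>simp add: g_def\<close>)
    qed
  qed
  moreover have "\<forall>y\<in>S0. g y = f y"
  proof
    fix y assume y: "y \<in> S0"
    have "Max (f ` {y'\<in>S0. y' \<le> y}) = f y"
      using fin y fm by (intro Max_eqI) auto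
    then show "g y = f y" using y by (auto simp: g_def)
  qed
  ultimately show ?thesis by blast
qed

theorem lemma4p2:
  fixes n :: nat and D :: "nat pmf" and \<epsilon> :: real and T :: "nat tree"
  assumes "set_pmf D \<subseteq> {1..n}"
    and "\<epsilon> > 0"
    and "is_bst_on n T"
  shows "\<exists>A. mono_tester n D \<epsilon> A \<and> max_queries_le A (24 / \<epsilon> * exp_depth T D)"
proof -
  have bstT: "bst T" and sT: "set_tree T = {1..n}" using assms(3) by (auto simp: is_bst_on_def)
  have SD: "set_pmf D \<subseteq> set_tree T" using assms(1) sT by simp
  have finD: "finite (set_pmf D)" using assms(1) finite_subset by blast
  have intD: "integrable (measure_pmf D) h" for h :: "nat \<Rightarrow> real"
    using finD by (rule integrable_measure_pmf_finite)
  define \<Delta> where "\<Delta> = exp_depth T D"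
  have \<Delta>0: "0 \<le> \<Delta>" unfolding \<Delta>_def exp_depth_def by simp
  define B where "B = 24 / \<epsilon> * \<Delta>"
  have B0: "0 \<le> B" unfolding B_def using \<Delta>0 assms(2) by simp
  define k where "k = nat \<lceil>2 / \<epsilon>\<rceil>"
  define b where "b = nat \<lfloor>B\<rfloor>"
  have bB: "real b \<le> B" unfolding b_def using B0 by simp
  define X where "X = Pi_pmf {..<k} 0 (\<lambda>_. D)"
  have sX: "set_pmf X = PiE_dflt {..<k} 0 (\<lambda>_. set_pmf D)"
    unfolding X_def by (simp add: set_Pi_pmf o_def)
  have xD: "x i \<in> set_pmf D" if "x \<in> set_pmf X" "i < k" for x i
    using that unfolding sX PiE_dflt_def by auto
  have finX: "finite (set_pmf X)" unfolding sX using finD by (intro finite_PiE_dflt) auto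
  have intX: "integrable (measure_pmf X) h" for h :: "(nat \<Rightarrow> nat) \<Rightarrow> real"
    using finX by (rule integrable_measure_pmf_finite)
  define tester where "tester x = tst T (map x [0..<k]) b" for x :: "nat \<Rightarrow> nat"
  define A where "A = map_pmf tester X"
  have setvs: "set (map x [0..<k]) \<subseteq> set_tree T" if "x \<in> set_pmf X" for x
    using xD[OF that] SD by auto
  have mq: "max_queries_le A B"
    unfolding max_queries_le_def A_def tester_def using tst_nq bB
    by (auto intro: order.trans[OF of_nat_mono[OF tst_nq]])
  have qi: "\<forall>t\<in>set_pmf A. \<forall>f. queries_in {1..n} t f"
    unfolding A_def tester_def using tst_qi[of T] sT by auto
  have acc: "measure_pmf.prob A {t. run_qt t f} > 2/3" if fm: "mono_on {1..n} f" for f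
  proof -
    have "set_pmf X \<subseteq> tester -` {t. run_qt t f}"
    proof
      fix x assume x: "x \<in> set_pmf X"
      have "\<forall>v\<in>set (map x [0..<k]). good T f v"
        using setvs[OF x] fm sT good_mono[of T f] by auto
      then show "x \<in> tester -` {t. run_qt t f}"
        unfolding tester_def using tst_acc[OF bstT setvs[OF x]] by auto
    qed
    then have "measure_pmf.prob X (tester -` {t. run_qt t f}) = 1" by (rule prob1)
    then show ?thesis unfolding A_def by simp
  qed
  have rej: "measure_pmf.prob A {t. \<not> run_qt t f} > 2/3" if far: "dist_mono n D f > \<epsilon>" for f
  proof -
    define G where "G = {v. good T f v}"
    define p where "p = measure_pmf.prob D G"
    have fmG: "f x \<le> f y" if "x \<in> set_tree T \<inter> G" "y \<in> set_tree T \<inter> G" "x \<le> y" for x y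
    proof (cases "x = y")
      case False
      then show ?thesis using that good_ord[OF bstT, of x y f] by (auto simp: G_def)
    qed simp
    obtain g where gm: "mono g" and gf: "\<forall>y\<in>set_tree T \<inter> G. g y = f y"
      using ext_mono[of "set_tree T \<inter> G" f, OF _ fmG] by auto
    have "dist_mono n D f \<le> measure_pmf.prob D {x. f x \<noteq> g x}"
      unfolding dist_mono_def
    proof (rule cInf_lower)
      show "measure_pmf.prob D {x. f x \<noteq> g x} \<in> {measure_pmf.prob D {x. f x \<noteq> g x} |g. mono_on {1..n} g}"
        using gm by (auto intro: monotone_on_subset)
      show "bdd_below {measure_pmf.prob D {x. f x \<noteq> g x} |g. mono_on {1..n} g}"
        by (rule bdd_belowI[of _ 0]) auto
    qed
    also have "\<dots> = measure_pmf.prob D ({x. f x \<noteq> g x} \<inter> set_pmf D)"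
      by (simp add: measure_Int_set_pmf)
    also have "\<dots> \<le> measure_pmf.prob D (- G)"
      using gf SD by (intro measure_pmf.finite_measure_mono) auto
    finally have c1: "\<epsilon> < measure_pmf.prob D (- G)" using far by simp
    have cG: "measure_pmf.prob D (- G) = 1 - p"
      using measure_pmf.prob_compl[of G D] unfolding p_def by (simp add: Compl_eq_Diff_UNIV)
    have "measure_pmf.prob D (- G) = measure_pmf.expectation D (indicator (- G))"
      by simp
    also have "\<dots> \<le> measure_pmf.expectation D (\<lambda>v. real (node_depth T v))"
    proof (rule integral_mono_AE[OF intD intD])
      show "AE x in measure_pmf D. indicator (- G) x \<le> real (node_depth T x)"
        unfolding AE_measure_pmf_iff
      proof
        fix v assume v: "v \<in> set_pmf D"
        show "indicator (- G) v \<le> real (node_depth T v)"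
        proof (cases "v \<in> G")
          case False
          then have "node_depth T v \<noteq> 0" using good_root[OF bstT, of v f] v SD by (auto simp: G_def)
          then show ?thesis using False by (simp add: indicator_def)
        qed (simp add: indicator_def)
      qed
    qed
    finally have c2: "measure_pmf.prob D (- G) \<le> \<Delta>" unfolding \<Delta>_def exp_depth_def .
    have \<Delta>pos: "\<Delta> > \<epsilon>" using c1 c2 by simp
    have Bpos: "B > 0" unfolding B_def using \<Delta>pos assms(2) by simp
    have c3: "measure_pmf.expectation D (\<lambda>v. real (cost T v)) \<le> 2 * \<Delta>"
    proof -
      have "measure_pmf.expectation D (\<lambda>v. real (cost T v)) \<le> measure_pmf.expectation D (\<lambda>v. 2 * real (node_depth T v))"
      proof (rule integral_mono_AE[OF intD intD])
        show "AE x in measure_pmf D. real (cost T x) \<le> 2 * real (node_depth T x)"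
          unfolding AE_measure_pmf_iff
        proof
          fix v assume v: "v \<in> set_pmf D"
          then have "length (path T v) = Suc (node_depth T v)" using path_len[OF bstT] SD by auto
          then show "real (cost T v) \<le> 2 * real (node_depth T v)" by (simp add: cost_def)
        qed
      qed
      then show ?thesis unfolding \<Delta>_def exp_depth_def by simp
    qed
    define S where "S x = (\<Sum>i<k. real (cost T (x i)))" for x :: "nat \<Rightarrow> nat"
    have comp: "measure_pmf.expectation X (\<lambda>x. real (cost T (x i))) = measure_pmf.expectation D (\<lambda>v. real (cost T v))"
      if "i < k" for i
    proof -
      have "map_pmf (\<lambda>x. x i) X = D" unfolding X_def using that by (simp add: Pi_pmf_component)
      then have "measure_pmf.expectation (map_pmf (\<lambda>x. x i) X) (\<lambda>v. real (cost T v)) = measure_pmf.expectation D (\<lambda>v. real (cost T v))"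
        by simp
      then show ?thesis by simp
    qed
    have c4: "measure_pmf.expectation X S \<le> real k * (2 * \<Delta>)"
    proof -
      have "measure_pmf.expectation X S = (\<Sum>i<k. measure_pmf.expectation X (\<lambda>x. real (cost T (x i))))"
        unfolding S_def by (rule Bochner_Integration.integral_sum) (rule intX)
      also have "\<dots> = (\<Sum>i<k. measure_pmf.expectation D (\<lambda>v. real (cost T v)))"
        using comp by simp
      also have "\<dots> \<le> real k * (2 * \<Delta>)" using c3 by (simp add: mult_left_mono)
      finally show ?thesis .
    qed
    have c5: "measure_pmf.prob X (Pi {..<k} (\<lambda>_. G)) = p ^ k"
      unfolding X_def p_def by (simp add: measure_Pi_pmf_Pi)
    have c7: "measure_pmf.prob X {x. B \<le> S x} \<le> measure_pmf.expectation X S / B"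
    proof -
      have ae: "AE x in measure_pmf X. 0 \<le> S x" by (simp add: S_def sum_nonneg)
      show ?thesis using integral_Markov_inequality_measure[OF intX _ ae Bpos, of UNIV] by simp
    qed
    have sub: "(- Pi {..<k} (\<lambda>_. G)) \<inter> {x. S x < B} \<inter> set_pmf X \<subseteq> tester -` {t. \<not> run_qt t f}"
    proof
      fix x assume x: "x \<in> (- Pi {..<k} (\<lambda>_. G)) \<inter> {x. S x < B} \<inter> set_pmf X"
      then obtain i where i: "i < k" "\<not> good T f (x i)" by (auto simp: G_def)
      have ex: "\<exists>v\<in>set (map x [0..<k]). \<not> good T f v" using i by force
      have "S x = real (sum_list (map (cost T) (map x [0..<k])))"
        unfolding S_def by (simp add: sum_list_sum_nth atLeast0LessThan)
      then have "real (sum_list (map (cost T) (map x [0..<k]))) \<le> B" using x by simp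
      then have "sum_list (map (cost T) (map x [0..<k])) \<le> b" unfolding b_def
        by (metis floor_mono floor_of_nat nat_int nat_mono)
      then show "x \<in> tester -` {t. \<not> run_qt t f}"
        unfolding tester_def using tst_rej[OF bstT setvs ex] x by auto
    qed
    have "measure_pmf.prob X ((- Pi {..<k} (\<lambda>_. G)) \<inter> {x. S x < B}) \<le> measure_pmf.prob X (tester -` {t. \<not> run_qt t f})"
    proof -
      have "measure_pmf.prob X ((- Pi {..<k} (\<lambda>_. G)) \<inter> {x. S x < B}) = measure_pmf.prob X ((- Pi {..<k} (\<lambda>_. G)) \<inter> {x. S x < B} \<inter> set_pmf X)"
        by (simp add: measure_Int_set_pmf)
      also have "\<dots> \<le> measure_pmf.prob X (tester -` {t. \<not> run_qt t f})"
        using sub by (intro measure_pmf.finite_measure_mono) auto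
      finally show ?thesis .
    qed
    moreover have "measure_pmf.prob X (- Pi {..<k} (\<lambda>_. G)) \<le> measure_pmf.prob X ((- Pi {..<k} (\<lambda>_. G)) \<inter> {x. S x < B}) + measure_pmf.prob X {x. B \<le> S x}"
    proof -
      have "- Pi {..<k} (\<lambda>_. G) \<subseteq> ((- Pi {..<k} (\<lambda>_. G)) \<inter> {x. S x < B}) \<union> {x. B \<le> S x}" by auto
      then have "measure_pmf.prob X (- Pi {..<k} (\<lambda>_. G)) \<le> measure_pmf.prob X (((- Pi {..<k} (\<lambda>_. G)) \<inter> {x. S x < B}) \<union> {x. B \<le> S x})"
        by (intro measure_pmf.finite_measure_mono) auto
      also have "\<dots> \<le> measure_pmf.prob X ((- Pi {..<k} (\<lambda>_. G)) \<inter> {x. S x < B}) + measure_pmf.prob X {x. B \<le> S x}"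
        by (rule measure_Un_le) auto
      finally show ?thesis .
    qed
    moreover have "measure_pmf.prob X (- Pi {..<k} (\<lambda>_. G)) = 1 - p ^ k"
      using measure_pmf.prob_compl[of "Pi {..<k} (\<lambda>_. G)" X] c5 by (simp add: Compl_eq_Diff_UNIV)
    ultimately have lb: "1 - p ^ k - measure_pmf.expectation X S / B \<le> measure_pmf.prob A {t. \<not> run_qt t f}"
      using c7 unfolding A_def by simp
    have e1: "\<epsilon> < 1" using c1 measure_pmf.prob_le_1[of D "- G"] by linarith
    have p0: "0 \<le> p" unfolding p_def by simp
    have p1: "p \<le> 1 - \<epsilon>" using c1 cG by simp
    have kx: "2 \<le> real k * \<epsilon>" "real k * \<epsilon> \<le> 3"
    proof -
      have "2 / \<epsilon> \<le> real k" unfolding k_def by linarith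
      then show "2 \<le> real k * \<epsilon>" using assms(2) by (simp add: field_simps)
      have pe: "0 < 2 / \<epsilon>" using assms(2) by simp
      have "real k = real_of_int \<lceil>2 / \<epsilon>\<rceil>" unfolding k_def using pe by simp
      then have "real k < 2 / \<epsilon> + 1" using ceiling_correct[of "2 / \<epsilon>"] by linarith
      then have "real k * \<epsilon> < (2 / \<epsilon> + 1) * \<epsilon>" using assms(2) by (intro mult_strict_right_mono) auto
      also have "\<dots> = 2 + \<epsilon>" using assms(2) by (simp add: field_simps)
      finally show "real k * \<epsilon> \<le> 3" using e1 by simp
    qed
    have "p ^ k \<le> (1 - \<epsilon>) ^ k" using p0 p1 by (intro power_mono) auto
    also have "\<dots> \<le> exp (- \<epsilon>) ^ k" using e1 exp_ge_add_one_self[of "- \<epsilon>"] by (intro power_mono) auto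
    also have "\<dots> = exp (- (real k * \<epsilon>))" by (simp add: exp_of_nat_mult[symmetric])
    finally have pk: "p ^ k \<le> exp (- (real k * \<epsilon>))" .
    have "measure_pmf.expectation X S / B \<le> real k * (2 * \<Delta>) / B"
      using c4 Bpos by (intro divide_right_mono) auto
    also have "\<dots> = real k * \<epsilon> / 12" unfolding B_def using \<Delta>pos assms(2) by (simp add: field_simps)
    finally have mk: "measure_pmf.expectation X S / B \<le> real k * \<epsilon> / 12" .
    have "exp (- (real k * \<epsilon>)) + real k * \<epsilon> / 12 < 1/3" using numbound kx by blast
    then show ?thesis using lb pk mk by linarith
  qed
  have "mono_tester n D \<epsilon> A" unfolding mono_tester_def using qi acc rej by blast
  then show ?thesis using mq unfolding B_def \<Delta>_def by blast
qed

end
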